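(* Let $G_2$ be the graph with vertices $v_1,\dots,v_6$ and edges $a_1=v_2v_6$, $a_2=v_2v_4$, $a_3=v_4v_6$, $a_4=v_1v_3$, $a_5=v_3v_5$, $a_6=v_1v_5$, $a_7=v_2v_5$, $a_8=v_1v_4$, $a_9=v_3v_6$. Then $$F^{G_2}(\mathbf{x},y)=\frac{1}{(1-yx_1x_5x_8)(1-yx_2x_6x_9)(1-yx_3x_4x_7)(1-yx_7x_8x_9)}+\frac{y^2x_1x_2x_3x_4x_5x_6}{(1-yx_1x_5x_8)(1-yx_2x_6x_9)(1-yx_3x_4x_7)(1-y^2x_1x_2x_3x_4x_5x_6)},$$ and consequently $F^{G_2}(y)=\frac{1+y+y^2}{(1-y)^3(1-y^2)}$.
   Context: For a finite graph $G$ with edges $a_1,\dots,a_n$, a magic labelling is an assignment of nonnegative integer labels $\alpha_i$ to the edges $a_i$ such that for every vertex $v$ the sum of the labels of the edges incident to $v$ equals the same number $s=s(\alpha)$ (the magic sum). A labelling is identified with $\alpha=(\alpha_1,\dots,\alpha_n)\in\mathbb{N}^n$, and $S(G)$ is the set of all magic labellings. Define the formal power series $F^G(\mathbf{x},y)=\sum_{\alpha\in S(G)}x_1^{\alpha_1}\cdots x_n^{\alpha_n}y^{s(\alpha)}$ and $F^G(y)=F^G(1,\dots,1,y)=\sum_{s\ge0}h_G(s)y^s$, where $h_G(s)$ is the number of magic labellings with magic sum $s$. *)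

theory Defs
  imports "HOL-Computational_Algebra.Formal_Power_Series"
begin

text \<open>A finite graph with vertex set V and edges a_1..a_n; the edge a_i has
  endpoint set ends i. A labelling is a function alpha :: nat => nat vanishing
  outside {1..n} (alpha i is the label of edge a_i).\<close>

definition magic_labelling ::
  "nat set \<Rightarrow> nat \<Rightarrow> (nat \<Rightarrow> nat set) \<Rightarrow> (nat \<Rightarrow> nat) \<Rightarrow> nat \<Rightarrow> bool" where
  "magic_labelling V n ends \<alpha> s \<longleftrightarrow>
     (\<forall>i. i \<notin> {1..n} \<longrightarrow> \<alpha> i = 0) \<and>
     (\<forall>v\<in>V. (\<Sum>i\<in>{i\<in>{1..n}. v \<in> ends i}. \<alpha> i) = s)"

definition hG :: "nat set \<Rightarrow> nat \<Rightarrow> (nat \<Rightarrow> nat set) \<Rightarrow> nat \<Rightarrow> nat" where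
  "hG V n ends s = card {\<alpha>. magic_labelling V n ends \<alpha> s}"

definition FG_y :: "nat set \<Rightarrow> nat \<Rightarrow> (nat \<Rightarrow> nat set) \<Rightarrow> rat fps" where
  "FG_y V n ends = Abs_fps (\<lambda>s. of_nat (hG V n ends s))"

text \<open>Formal power series in the 10 variables y, x_1, ..., x_9, realised as nested
  univariate formal power series: outermost variable y, then x_1, ..., innermost x_9.\<close>
type_synonym mps10 = "rat fps fps fps fps fps fps fps fps fps fps"

definition lab9 :: "nat list \<Rightarrow> nat \<Rightarrow> nat" where
  "lab9 as i = (if 1 \<le> i \<and> i \<le> 9 then as ! (i - 1) else 0)"

definition FG9 :: "nat set \<Rightarrow> (nat \<Rightarrow> nat set) \<Rightarrow> mps10" where
  "FG9 V ends = Abs_fps (\<lambda>s. Abs_fps (\<lambda>a1. Abs_fps (\<lambda>a2. Abs_fps (\<lambda>a3.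
     Abs_fps (\<lambda>a4. Abs_fps (\<lambda>a5. Abs_fps (\<lambda>a6. Abs_fps (\<lambda>a7.
     Abs_fps (\<lambda>a8. Abs_fps (\<lambda>a9.
       if magic_labelling V 9 ends (lab9 [a1,a2,a3,a4,a5,a6,a7,a8,a9]) s then 1 else 0))))))))))"

definition Yv :: mps10 where "Yv = fps_X"
definition X1 :: mps10 where "X1 = fps_const fps_X"
definition X2 :: mps10 where "X2 = fps_const (fps_const fps_X)"
definition X3 :: mps10 where "X3 = fps_const (fps_const (fps_const fps_X))"
definition X4 :: mps10 where "X4 = fps_const (fps_const (fps_const (fps_const fps_X)))"
definition X5 :: mps10 where
  "X5 = fps_const (fps_const (fps_const (fps_const (fps_const fps_X))))"
definition X6 :: mps10 where
  "X6 = fps_const (fps_const (fps_const (fps_const (fps_const (fps_const fps_X)))))"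
definition X7 :: mps10 where
  "X7 = fps_const (fps_const (fps_const (fps_const (fps_const (fps_const (fps_const fps_X))))))"
definition X8 :: mps10 where
  "X8 = fps_const (fps_const (fps_const (fps_const (fps_const (fps_const (fps_const
          (fps_const fps_X)))))))"
definition X9 :: mps10 where
  "X9 = fps_const (fps_const (fps_const (fps_const (fps_const (fps_const (fps_const
          (fps_const (fps_const fps_X))))))))"

definition G2_V :: "nat set" where "G2_V = {1..6}"

definition G2_ends :: "nat \<Rightarrow> nat set" where
  "G2_ends i = (if i = 1 then {2,6} else if i = 2 then {2,4} else if i = 3 then {4,6}
     else if i = 4 then {1,3} else if i = 5 then {3,5} else if i = 6 then {1,5}
     else if i = 7 then {2,5} else if i = 8 then {1,4} else if i = 9 then {3,6} else {})"

end

theory Submission imports Defs begin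
unbundle fps_syntax

definition ser :: "('p \<Rightarrow> nat) \<Rightarrow> ('p \<Rightarrow> 'a::comm_monoid_add) \<Rightarrow> 'a fps" where
  "ser d m = Abs_fps (\<lambda>s. sum m {p. d p = s})"

lemma ser_nth: "ser d m $ s = sum m {p. d p = s}"
  by (simp add: ser_def)

lemma ser_mult:
  fixes m :: "'p \<Rightarrow> 'a::comm_semiring_1" and n :: "'q \<Rightarrow> 'a"
  assumes fd: "\<And>s. finite {p. d p = s}" and fe: "\<And>s. finite {q. e q = s}"
  shows "ser d m * ser e n = ser (\<lambda>(p,q). d p + e q) (\<lambda>(p,q). m p * n q)"
proof (rule fps_ext)
  fix s
  have eq: "{pq. (\<lambda>(p,q). d p + e q) pq = s} = (\<Union>i\<in>{0..s}. {p. d p = i} \<times> {q. e q = s - i})"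
    by auto
  have "(ser d m * ser e n) $ s = (\<Sum>i=0..s. sum m {p. d p = i} * sum n {q. e q = s - i})"
    by (simp add: fps_mult_nth ser_nth)
  also have "\<dots> = (\<Sum>i=0..s. \<Sum>pq\<in>{p. d p = i} \<times> {q. e q = s - i}. (\<lambda>(p,q). m p * n q) pq)"
    by (simp add: sum_product sum.cartesian_product)
  also have "\<dots> = sum (\<lambda>(p,q). m p * n q) (\<Union>i\<in>{0..s}. {p. d p = i} \<times> {q. e q = s - i})"
    by (rule sum.UNION_disjoint[symmetric]) (auto simp: fd fe)
  also have "\<dots> = ser (\<lambda>(p,q). d p + e q) (\<lambda>(p,q). m p * n q) $ s"
    by (simp add: ser_nth eq)
  finally show "(ser d m * ser e n) $ s = ser (\<lambda>(p,q). d p + e q) (\<lambda>(p,q). m p * n q) $ s" .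
qed

lemma ser_fin:
  fixes d :: "'p \<Rightarrow> nat" and e :: "'q \<Rightarrow> nat"
  assumes fd: "\<And>s. finite {p. d p = s}" and fe: "\<And>s. finite {q. e q = s}"
  shows "finite {pq. (\<lambda>(p,q). d p + e q) pq = s}"
proof -
  have eq: "{pq. (\<lambda>(p,q). d p + e q) pq = s} = (\<Union>i\<in>{0..s}. {p. d p = i} \<times> {q. e q = s - i})"
    by auto
  show ?thesis unfolding eq using fd fe by auto
qed

lemma ser_id: "ser (\<lambda>k. k) m = Abs_fps m"
  by (simp add: ser_def)

lemma ser_2: "ser (\<lambda>k::nat. 2*k) m = Abs_fps (\<lambda>n. if even n then m (n div 2) else 0)"
proof (rule fps_ext)
  fix n
  have "{k::nat. 2*k = n} = (if even n then {n div 2} else {})" by auto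
  then show "ser (\<lambda>k. 2*k) m $ n = Abs_fps (\<lambda>n. if even n then m (n div 2) else 0) $ n"
    by (simp add: ser_nth)
qed

lemma geo_inv:
  fixes c :: "'a::comm_ring_1"
  shows "(1 - fps_X * fps_const c) * Abs_fps (\<lambda>k. c^k) = 1"
proof (rule fps_ext)
  fix n show "((1 - fps_X * fps_const c) * Abs_fps (\<lambda>k. c^k)) $ n = (1::'a fps) $ n"
    by (cases n) (simp_all add: algebra_simps mult.assoc)
qed

lemma geo2_inv:
  fixes c :: "'a::comm_ring_1"
  shows "(1 - fps_X^2 * fps_const c) * Abs_fps (\<lambda>n. if even n then c^(n div 2) else 0) = 1"
proof (rule fps_ext)
  fix n show "((1 - fps_X^2 * fps_const c) * Abs_fps (\<lambda>n. if even n then c^(n div 2) else 0)) $ n = (1::'a fps) $ n"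
  proof (cases n)
    case 0 then show ?thesis by (simp add: algebra_simps power2_eq_square mult.assoc)
  next
    case (Suc m) then show ?thesis 
      by (cases m) (auto simp add: algebra_simps power2_eq_square mult.assoc)
  qed
qed

lemma inv_right:
  fixes f :: "'a::{comm_ring_1,inverse} fps"
  assumes "inverse (1::'a) = 1" "f $ 0 = 1"
  shows "f * inverse f = 1"
  unfolding fps_inverse_def using assms fps_right_inverse[of f 1] by simp

lemma inv_unique:
  fixes f :: "'a::{comm_ring_1,inverse} fps"
  assumes "inverse (1::'a) = 1" "f $ 0 = 1" "f * g = 1"
  shows "inverse f = g"
proof -
  have "f * inverse f = 1" using inv_right assms by blast
  then have "inverse f = inverse f * (f * g)" using assms(3) by simp
  also have "\<dots> = g" using \<open>f * inverse f = 1\<close> by (metis mult.assoc mult.commute mult_1)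
  finally show ?thesis .
qed


lemma fin_id: "finite {k::nat. k = s}" by simp
lemma fin_2: "finite {k::nat. 2*k = s}"
  by (rule finite_subset[of _ "{..s}"]) auto

lemma ser_cong: "d = d' \<Longrightarrow> m = m' \<Longrightarrow> ser d m = ser d' m'" by simp

definition D4 :: "nat \<times> nat \<times> nat \<times> nat \<Rightarrow> nat" where
  "D4 = (\<lambda>(k1,k2,k3,k4). k1+k2+k3+k4)"
definition D5 :: "nat \<times> nat \<times> nat \<times> nat \<Rightarrow> nat" where
  "D5 = (\<lambda>(k1,k2,k3,k). k1+k2+k3+2*k)"

lemma generic_identity:
  fixes c1 c2 c3 c4 t :: "'a::{comm_ring_1,inverse}"
  assumes inv1: "inverse (1::'a) = 1"
  shows "inverse ((1 - fps_X * fps_const c1) * (1 - fps_X * fps_const c2) * (1 - fps_X * fps_const c3)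
             * (1 - fps_X * fps_const c4))
        + fps_X^2 * fps_const t * inverse ((1 - fps_X * fps_const c1) * (1 - fps_X * fps_const c2)
             * (1 - fps_X * fps_const c3) * (1 - fps_X^2 * fps_const t))
      = ser D4 (\<lambda>(k1,k2,k3,k4). c1^k1*c2^k2*c3^k3*c4^k4)
        + ser D5 (\<lambda>(k1,k2,k3,k). c1^k1*c2^k2*c3^k3*(if k \<ge> 1 then t^k else 0))"
proof -
  define G where "G c = (Abs_fps (\<lambda>k. c^k) :: 'a fps)" for c
  define H where "H = (Abs_fps (\<lambda>n. if even n then t^(n div 2) else 0) :: 'a fps)"
  define m where "m c = (1 - fps_X * fps_const c :: 'a fps)" for c
  define N where "N = (fps_X^2 * fps_const t :: 'a fps)"
  have mG: "m c * G c = 1" for c unfolding m_def G_def by (rule geo_inv)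
  have NH: "(1 - N) * H = 1" unfolding N_def H_def by (rule geo2_inv)
  have m0: "m c $ 0 = 1" for c by (simp add: m_def)
  have N0: "(1 - N) $ 0 = 1" by (simp add: N_def power2_eq_square)
  have i1: "inverse (m c1 * m c2 * m c3 * m c4) = G c1 * (G c2 * (G c3 * G c4))"
    apply (rule inv_unique[OF inv1])
     apply (simp add: m0)
    using mG[of c1] mG[of c2] mG[of c3] mG[of c4]
    by (simp add: mult_ac)
  have i2: "inverse (m c1 * m c2 * m c3 * (1 - N)) = G c1 * (G c2 * (G c3 * H))"
    apply (rule inv_unique[OF inv1])
     apply (simp add: m0 N_def power2_eq_square)
  proof -
    have "m c1 * m c2 * m c3 * (1 - N) * (G c1 * (G c2 * (G c3 * H))) = (m c1 * G c1) * (m c2 * G c2) * (m c3 * G c3) * ((1-N) * H)"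
      by (simp only: mult_ac)
    then show "m c1 * m c2 * m c3 * (1 - N) * (G c1 * (G c2 * (G c3 * H))) = 1" by (simp only: mG NH mult_1)
  qed
  have NH2: "N * H = H - 1" using NH by (simp add: algebra_simps)
  have Hm1: "H - 1 = ser (\<lambda>k::nat. 2*k) (\<lambda>k. if k \<ge> 1 then t^k else 0)"
    unfolding ser_2 H_def by (rule fps_ext) auto
  have Gs: "G c = ser (\<lambda>k::nat. k) (\<lambda>k. c^k)" for c by (simp add: G_def ser_id)
  have p1: "G c1 * (G c2 * (G c3 * G c4)) = ser D4 (\<lambda>(k1,k2,k3,k4). c1^k1*c2^k2*c3^k3*c4^k4)"
    unfolding Gs
    apply (simp add: ser_mult ser_fin fin_id)
    apply (rule ser_cong)
     apply (auto simp: D4_def fun_eq_iff)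
    done
  have p2: "G c1 * (G c2 * (G c3 * (H - 1))) = ser D5 (\<lambda>(k1,k2,k3,k). c1^k1*c2^k2*c3^k3*(if k \<ge> 1 then t^k else 0))"
    unfolding Gs Hm1
    apply (simp add: ser_mult ser_fin fin_id fin_2 del: One_nat_def)
    apply (rule ser_cong)
     apply (auto simp: D5_def fun_eq_iff)
    done
  have "N * inverse (m c1 * m c2 * m c3 * (1 - N)) = G c1 * (G c2 * (G c3 * (H - 1)))"
    unfolding i2 NH2[symmetric] by (simp add: mult_ac)
  then show ?thesis using i1 p1 p2 unfolding m_def N_def by simp
qed


type_synonym p9 = "rat fps fps fps fps fps fps fps fps fps"

definition y1 :: p9 where "y1 = fps_X"
definition y2 :: p9 where "y2 = fps_const fps_X"
definition y3 :: p9 where "y3 = fps_const (fps_const fps_X)"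
definition y4 :: p9 where "y4 = fps_const (fps_const (fps_const fps_X))"
definition y5 :: p9 where "y5 = fps_const (fps_const (fps_const (fps_const fps_X)))"
definition y6 :: p9 where "y6 = fps_const (fps_const (fps_const (fps_const (fps_const fps_X))))"
definition y7 :: p9 where "y7 = fps_const (fps_const (fps_const (fps_const (fps_const (fps_const fps_X)))))"
definition y8 :: p9 where "y8 = fps_const (fps_const (fps_const (fps_const (fps_const (fps_const (fps_const fps_X))))))"
definition y9 :: p9 where "y9 = fps_const (fps_const (fps_const (fps_const (fps_const (fps_const (fps_const (fps_const fps_X)))))))"

lemma X_eqs: "X1 = fps_const y1" "X2 = fps_const y2" "X3 = fps_const y3" "X4 = fps_const y4"
  "X5 = fps_const y5" "X6 = fps_const y6" "X7 = fps_const y7" "X8 = fps_const y8" "X9 = fps_const y9"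
  by (simp_all add: X1_def X2_def X3_def X4_def X5_def X6_def X7_def X8_def X9_def
     y1_def y2_def y3_def y4_def y5_def y6_def y7_def y8_def y9_def)

definition ind9 :: "(nat list \<Rightarrow> rat) \<Rightarrow> p9" where
  "ind9 f = Abs_fps (\<lambda>a1. Abs_fps (\<lambda>a2. Abs_fps (\<lambda>a3.
     Abs_fps (\<lambda>a4. Abs_fps (\<lambda>a5. Abs_fps (\<lambda>a6. Abs_fps (\<lambda>a7.
     Abs_fps (\<lambda>a8. Abs_fps (\<lambda>a9. f [a1,a2,a3,a4,a5,a6,a7,a8,a9])))))))))"

definition monoL :: "nat list \<Rightarrow> p9" where
  "monoL v = y1^(v!0) * y2^(v!1) * y3^(v!2) * y4^(v!3) * y5^(v!4) * y6^(v!5) * y7^(v!6) * y8^(v!7) * y9^(v!8)"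

lemma Xpow_const: "(fps_X::'a::comm_semiring_1 fps)^n * fps_const c = Abs_fps (\<lambda>k. if k = n then c else 0)"
  by (rule fps_ext) (simp add: fps_X_power_iff)

lemma if_Abs0: "(if P then Abs_fps f else 0) = Abs_fps (\<lambda>n. if P then f n else 0)"
  by (rule fps_ext) simp

lemma if_if0: "(if P then (if Q then x else 0) else 0) = (if P \<and> Q then x else 0)" by simp

lemma monoL_ind: "monoL [b1,b2,b3,b4,b5,b6,b7,b8,b9] = ind9 (\<lambda>a. if a = [b1,b2,b3,b4,b5,b6,b7,b8,b9] then 1 else 0)"
proof -
  have "monoL [b1,b2,b3,b4,b5,b6,b7,b8,b9] = fps_X^b1 * fps_const (fps_X^b2 * fps_const (fps_X^b3 *
     fps_const (fps_X^b4 * fps_const (fps_X^b5 * fps_const (fps_X^b6 * fps_const (fps_X^b7 *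
     fps_const (fps_X^b8 * fps_const (fps_X^b9 * fps_const 1))))))))"
    by (simp add: monoL_def y1_def y2_def y3_def y4_def y5_def y6_def y7_def y8_def y9_def mult.assoc)
  also have "\<dots> = ind9 (\<lambda>a. if a = [b1,b2,b3,b4,b5,b6,b7,b8,b9] then 1 else 0)"
    unfolding Xpow_const ind9_def
    by (simp only: if_Abs0 if_if0 list.inject conj_assoc simp_thms)
  finally show ?thesis .
qed

lemma sum_Abs_fps: "(\<Sum>i\<in>A. Abs_fps (f i)) = Abs_fps (\<lambda>n. \<Sum>i\<in>A. f i n)"
  by (rule fps_ext) (simp add: fps_sum_nth)

lemma sum_ind9: "(\<Sum>i\<in>A. ind9 (f i)) = ind9 (\<lambda>a. \<Sum>i\<in>A. f i a)"
  unfolding ind9_def by (simp only: sum_Abs_fps)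


lemma ends_sets:
  "{i\<in>{1..9}. (1::nat) \<in> G2_ends i} = {4,6,8}"
  "{i\<in>{1..9}. (2::nat) \<in> G2_ends i} = {1,2,7}"
  "{i\<in>{1..9}. (3::nat) \<in> G2_ends i} = {4,5,9}"
  "{i\<in>{1..9}. (4::nat) \<in> G2_ends i} = {2,3,8}"
  "{i\<in>{1..9}. (5::nat) \<in> G2_ends i} = {5,6,7}"
  "{i\<in>{1..9}. (6::nat) \<in> G2_ends i} = {1,3,9}"
  by (auto simp: G2_ends_def split: if_splits)

lemma magic_iff:
  "magic_labelling G2_V 9 G2_ends (lab9 [a1,a2,a3,a4,a5,a6,a7,a8,a9]) s \<longleftrightarrow>
    a4+a6+a8 = s \<and> a1+a2+a7 = s \<and> a4+a5+a9 = s \<and> a2+a3+a8 = s \<and> a5+a6+a7 = s \<and> a1+a3+a9 = s"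
proof -
  have V: "G2_V = {1,2,3,4,5,6}" by (auto simp: G2_V_def)
  show ?thesis
    apply (simp only: magic_labelling_def V ball_simps ends_sets)
    apply (simp add: lab9_def add.assoc)
    done
qed

definition phi1 :: "nat \<times> nat \<times> nat \<times> nat \<Rightarrow> nat list" where
  "phi1 = (\<lambda>(k1,k2,k3,k4). [k1,k2,k3,k3,k1,k2,k3+k4,k1+k4,k2+k4])"
definition phi2 :: "nat \<times> nat \<times> nat \<times> nat \<Rightarrow> nat list" where
  "phi2 = (\<lambda>(k1,k2,k3,k). [k1+k,k2+k,k3+k,k3+k,k1+k,k2+k,k3,k1,k2])"

definition AS :: "nat \<Rightarrow> nat list set" where
  "AS s = {v. length v = 9 \<and> magic_labelling G2_V 9 G2_ends (lab9 v) s}"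

lemma len9: "length v = 9 \<Longrightarrow> v = [v!0,v!1,v!2,v!3,v!4,v!5,v!6,v!7,v!8]"
  by (simp add: list_eq_iff_nth_eq less_Suc_eq nth_Cons' numeral_eq_Suc)

lemma AS_decomp: "AS s = phi1 ` {q. D4 q = s} \<union> phi2 ` {q. D5 q = s \<and> snd (snd (snd q)) \<ge> 1}"
proof (intro equalityI subsetI)
  fix v assume "v \<in> AS s"
  then have l: "length v = 9" and m: "magic_labelling G2_V 9 G2_ends (lab9 v) s" by (auto simp: AS_def)
  obtain a1 a2 a3 a4 a5 a6 a7 a8 a9 where v: "v = [a1,a2,a3,a4,a5,a6,a7,a8,a9]"
    using len9[OF l] by blast
  have e: "a4+a6+a8 = s \<and> a1+a2+a7 = s \<and> a4+a5+a9 = s \<and> a2+a3+a8 = s \<and> a5+a6+a7 = s \<and> a1+a3+a9 = s"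
    using m unfolding v magic_iff .
  show "v \<in> phi1 ` {q. D4 q = s} \<union> phi2 ` {q. D5 q = s \<and> snd (snd (snd q)) \<ge> 1}"
  proof (cases "a3 \<le> a7")
    case True
    have "v = phi1 (a1, a2, a3, a7 - a3)" using e True unfolding v phi1_def by auto
    moreover have "D4 (a1, a2, a3, a7 - a3) = s" using e True by (auto simp: D4_def)
    ultimately show ?thesis by blast
  next
    case False
    have "v = phi2 (a8, a9, a7, a3 - a7)" using e False unfolding v phi2_def by auto
    moreover have "D5 (a8, a9, a7, a3 - a7) = s" using e False by (auto simp: D5_def)
    ultimately show ?thesis using False by force
  qed
next
  fix v assume "v \<in> phi1 ` {q. D4 q = s} \<union> phi2 ` {q. D5 q = s \<and> snd (snd (snd q)) \<ge> 1}"
  then show "v \<in> AS s"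
    by (auto simp: AS_def phi1_def phi2_def D4_def D5_def magic_iff)
qed

lemma phi_disj: "phi1 ` A \<inter> phi2 ` {q. snd (snd (snd q)) \<ge> 1} = {}"
  by (auto simp: phi1_def phi2_def)

lemma phi1_inj: "inj phi1" by (auto simp: inj_def phi1_def)
lemma phi2_inj: "inj phi2" by (auto simp: inj_def phi2_def)

lemma finD4: "finite {q. D4 q = s}"
  by (rule finite_subset[of _ "{..s} \<times> {..s} \<times> {..s} \<times> {..s}"]) (auto simp: D4_def)
lemma finD5: "finite {q. D5 q = s}"
  by (rule finite_subset[of _ "{..s} \<times> {..s} \<times> {..s} \<times> {..s}"]) (auto simp: D5_def)


lemma ratfun: "(1 + (fps_X::rat fps) + fps_X^2) / ((1 - fps_X)^3 * (1 - fps_X^2)) =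
   inverse ((1 - fps_X) * (1 - fps_X) * (1 - fps_X) * (1 - fps_X))
   + fps_X^2 * inverse ((1 - fps_X) * (1 - fps_X) * (1 - fps_X) * (1 - fps_X^2))"
proof -
  define I where "I = inverse (1 - fps_X :: rat fps)"
  define J where "J = inverse (1 - fps_X^2 :: rat fps)"
  have hI: "(1 - fps_X) * I = 1" unfolding I_def by (rule inverse_mult_eq_1') simp
  have hJ: "(1 - fps_X^2) * J = 1" unfolding J_def by (rule inverse_mult_eq_1') (simp add: power2_eq_square)
  have "I = I * ((1 - fps_X^2) * J)" using hJ by simp
  also have "\<dots> = ((1 - fps_X) * I) * (1 + fps_X) * J" by (simp add: algebra_simps power2_eq_square)
  finally have hIJ: "I = (1 + fps_X) * J" using hI by simp
  have L: "(1 + fps_X + fps_X^2) / ((1 - fps_X)^3 * (1 - fps_X^2)) = (1 + fps_X + fps_X^2) * (I*I*I*J :: rat fps)"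
    by (simp add: fps_divide_unit power2_eq_square power3_eq_cube fps_inverse_mult I_def J_def)
  have R: "inverse ((1 - fps_X) * (1 - fps_X) * (1 - fps_X) * (1 - fps_X))
   + fps_X^2 * inverse ((1 - fps_X) * (1 - fps_X) * (1 - fps_X) * (1 - fps_X^2)) = I*I*I*I + fps_X^2 * (I*I*I*J :: rat fps)"
    by (simp add: fps_inverse_mult I_def J_def)
  show ?thesis unfolding L R hIJ by algebra
qed

lemma inv1_p9: "inverse (1::p9) = 1"
  by (simp add: fps_inverse_one')

lemma ind9_cong: "(\<And>a1 a2 a3 a4 a5 a6 a7 a8 a9. f [a1,a2,a3,a4,a5,a6,a7,a8,a9] = g [a1,a2,a3,a4,a5,a6,a7,a8,a9]) \<Longrightarrow> ind9 f = ind9 g"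
  unfolding ind9_def by simp

lemma AS_bound: "v \<in> AS s \<Longrightarrow> set v \<subseteq> {..s}"
proof -
  assume "v \<in> AS s"
  then have l: "length v = 9" and m: "magic_labelling G2_V 9 G2_ends (lab9 v) s" by (auto simp: AS_def)
  obtain a1 a2 a3 a4 a5 a6 a7 a8 a9 where v: "v = [a1,a2,a3,a4,a5,a6,a7,a8,a9]"
    using len9[OF l] by blast
  show ?thesis using m unfolding v magic_iff by auto
qed

lemma AS_fin: "finite (AS s)"
proof (rule finite_subset[of _ "{v. set v \<subseteq> {..s} \<and> length v = 9}"])
  show "AS s \<subseteq> {v. set v \<subseteq> {..s} \<and> length v = 9}"
  proof
    fix v assume a: "v \<in> AS s"
    have "set v \<subseteq> {..s}" using AS_bound[OF a] .
    moreover have "length v = 9" using a by (simp add: AS_def)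
    ultimately show "v \<in> {v. set v \<subseteq> {..s} \<and> length v = 9}" by simp
  qed
qed (simp add: finite_lists_length_eq)

lemma monoL_ind': "length v = 9 \<Longrightarrow> monoL v = ind9 (\<lambda>a. if a = v then 1 else 0)"
  using monoL_ind[of "v!0" "v!1" "v!2" "v!3" "v!4" "v!5" "v!6" "v!7" "v!8"] len9[of v] by simp

lemma FG9_nth: "FG9 G2_V G2_ends $ s = (\<Sum>v\<in>AS s. monoL v)"
proof -
  have "FG9 G2_V G2_ends $ s = ind9 (\<lambda>a. if magic_labelling G2_V 9 G2_ends (lab9 a) s then 1 else 0)"
    by (simp add: FG9_def ind9_def)
  also have "\<dots> = ind9 (\<lambda>a. \<Sum>v\<in>AS s. if a = v then 1 else 0)"
    by (rule ind9_cong) (simp add: AS_fin, simp add: AS_def)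
  also have "\<dots> = (\<Sum>v\<in>AS s. ind9 (\<lambda>a. if a = v then 1 else 0))"
    by (simp only: sum_ind9)
  also have "\<dots> = (\<Sum>v\<in>AS s. monoL v)"
    by (rule sum.cong) (auto simp: monoL_ind' AS_def)
  finally show ?thesis .
qed

lemma AS_sum: "sum f (AS s) = sum (f \<circ> phi1) {q. D4 q = s} + sum (f \<circ> phi2) {q. D5 q = s \<and> snd (snd (snd q)) \<ge> 1}"
proof -
  have f5: "finite {q. D5 q = s \<and> snd (snd (snd q)) \<ge> 1}" using finD5[of s] by (rule rev_finite_subset) auto
  have r1: "sum f (phi1 ` A) = sum (f \<circ> phi1) A" for A
    by (rule sum.reindex) (rule inj_on_subset[OF phi1_inj], simp)
  have r2: "sum f (phi2 ` A) = sum (f \<circ> phi2) A" for A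
    by (rule sum.reindex) (rule inj_on_subset[OF phi2_inj], simp)
  have "sum f (AS s) = sum f (phi1 ` {q. D4 q = s}) + sum f (phi2 ` {q. D5 q = s \<and> snd (snd (snd q)) \<ge> 1})"
    unfolding AS_decomp
    by (rule sum.union_disjoint) (use finD4 f5 phi_disj in auto)
  also have "\<dots> = sum (f \<circ> phi1) {q. D4 q = s} + sum (f \<circ> phi2) {q. D5 q = s \<and> snd (snd (snd q)) \<ge> 1}"
    by (simp only: r1 r2)
  finally show ?thesis .
qed

lemma D5_filter: "sum (\<lambda>q. if snd (snd (snd q)) \<ge> 1 then g q else 0) {q. D5 q = s} = sum g {q. D5 q = s \<and> snd (snd (snd q)) \<ge> 1}"
proof -
  have eq: "{q. D5 q = s \<and> snd (snd (snd q)) \<ge> 1} = {q\<in>{q. D5 q = s}. snd (snd (snd q)) \<ge> 1}" by auto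
  show ?thesis unfolding eq by (rule sum.inter_filter[OF finD5, symmetric])
qed


lemma lab9_inj: "inj_on lab9 (AS s)"
proof (rule inj_onI)
  fix v w assume v: "v \<in> AS s" and w: "w \<in> AS s" and e: "lab9 v = lab9 w"
  have lv: "length v = 9" and lw: "length w = 9" using v w by (auto simp: AS_def)
  have "v ! i = w ! i" if "i < 9" for i
    using fun_cong[OF e, of "Suc i"] that by (simp add: lab9_def)
  then show "v = w" using lv lw by (simp add: list_eq_iff_nth_eq)
qed

lemma magic_image: "{\<alpha>. magic_labelling G2_V 9 G2_ends \<alpha> s} = lab9 ` AS s"
proof (intro equalityI subsetI)
  fix \<alpha> assume "\<alpha> \<in> {\<alpha>. magic_labelling G2_V 9 G2_ends \<alpha> s}"
  then have m: "magic_labelling G2_V 9 G2_ends \<alpha> s" by simp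
  have z: "\<alpha> i = 0" if "i \<notin> {1..9}" for i using m that by (simp add: magic_labelling_def)
  have eq: "lab9 (map \<alpha> [1..<10]) = \<alpha>"
  proof
    fix i show "lab9 (map \<alpha> [1..<10]) i = \<alpha> i"
      using z[of i] by (auto simp: lab9_def nth_map)
  qed
  have "map \<alpha> [1..<10] \<in> AS s" unfolding AS_def mem_Collect_eq eq using m by simp
  then show "\<alpha> \<in> lab9 ` AS s" using eq by (metis image_eqI)
next
  fix \<alpha> assume "\<alpha> \<in> lab9 ` AS s"
  then show "\<alpha> \<in> {\<alpha>. magic_labelling G2_V 9 G2_ends \<alpha> s}" by (auto simp: AS_def)
qed

lemma card_magic: "card {\<alpha>. magic_labelling G2_V 9 G2_ends \<alpha> s} =
   card {q. D4 q = s} + card {q. D5 q = s \<and> snd (snd (snd q)) \<ge> 1}"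
proof -
  have "card {\<alpha>. magic_labelling G2_V 9 G2_ends \<alpha> s} = card (AS s)"
    unfolding magic_image by (rule card_image[OF lab9_inj])
  also have "\<dots> = (\<Sum>v\<in>AS s. (1::nat))" by simp
  also have "\<dots> = sum ((\<lambda>_. 1::nat) \<circ> phi1) {q. D4 q = s} + sum ((\<lambda>_. 1::nat) \<circ> phi2) {q. D5 q = s \<and> snd (snd (snd q)) \<ge> 1}"
    by (rule AS_sum)
  also have "\<dots> = card {q. D4 q = s} + card {q. D5 q = s \<and> snd (snd (snd q)) \<ge> 1}"
    by (simp add: comp_def)
  finally show ?thesis .
qed

lemma gen_rat: "inverse ((1 - fps_X) * (1 - fps_X) * (1 - fps_X) * (1 - fps_X))
   + fps_X^2 * inverse ((1 - fps_X) * (1 - fps_X) * (1 - fps_X) * (1 - fps_X^2)) =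
   ser D4 (\<lambda>(k1,k2,k3,k4). 1::rat) + ser D5 (\<lambda>(k1,k2,k3,k). if k \<ge> 1 then 1 else 0)"
  using generic_identity[of "1::rat" 1 1 1 1] by (simp cong: if_cong)

lemma part2: "FG_y G2_V 9 G2_ends = (1 + fps_X + fps_X^2) / ((1 - fps_X)^3 * (1 - fps_X^2))"
proof (rule fps_ext)
  fix s
  have "FG_y G2_V 9 G2_ends $ s = of_nat (card {q. D4 q = s}) + of_nat (card {q. D5 q = s \<and> snd (snd (snd q)) \<ge> 1})"
    by (simp add: FG_y_def hG_def card_magic)
  also have "\<dots> = (ser D4 (\<lambda>(k1,k2,k3,k4). 1::rat) + ser D5 (\<lambda>(k1,k2,k3,k). if k \<ge> 1 then 1 else 0)) $ s"
  proof -
    have a: "ser D4 (\<lambda>(k1,k2,k3,k4). 1::rat) $ s = of_nat (card {q. D4 q = s})"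
      by (simp add: ser_nth split_def)
    have b: "ser D5 (\<lambda>(k1,k2,k3,k). if k \<ge> 1 then 1 else (0::rat)) $ s = of_nat (card {q. D5 q = s \<and> snd (snd (snd q)) \<ge> 1})"
      using D5_filter[of "\<lambda>_. 1::rat" s] by (simp add: ser_nth split_def)
    show ?thesis using a b by simp
  qed
  finally show "FG_y G2_V 9 G2_ends $ s = ((1 + fps_X + fps_X^2) / ((1 - fps_X)^3 * (1 - fps_X^2))) $ s"
    unfolding ratfun gen_rat .
qed

definition "c1 = y1 * (y5 * y8)"
definition "c2 = y2 * (y6 * y9)"
definition "c3 = y3 * (y4 * y7)"
definition "c4 = y7 * (y8 * y9)"
definition "tt = y1 * (y2 * (y3 * (y4 * (y5 * y6))))"

lemma part1_coeffs: "FG9 G2_V G2_ends = ser D4 (\<lambda>(k1,k2,k3,k4). c1^k1*c2^k2*c3^k3*c4^k4)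
        + ser D5 (\<lambda>(k1,k2,k3,k). c1^k1*c2^k2*c3^k3*(if k \<ge> 1 then tt^k else 0))"
proof (rule fps_ext)
  fix s
  have M4: "(\<lambda>(k1,k2,k3,k4). c1^k1*c2^k2*c3^k3*c4^k4) q = monoL (phi1 q)" for q
    by (cases q) (simp add: monoL_def phi1_def c1_def c2_def c3_def c4_def power_add power_mult_distrib mult_ac)
  have M5: "(\<lambda>(k1,k2,k3,k). c1^k1*c2^k2*c3^k3*(if k \<ge> 1 then tt^k else 0)) q
      = (if snd (snd (snd q)) \<ge> 1 then monoL (phi2 q) else 0)" for q
    by (cases q) (simp add: monoL_def phi2_def c1_def c2_def c3_def tt_def power_add power_mult_distrib mult_ac)
  show "FG9 G2_V G2_ends $ s = (ser D4 (\<lambda>(k1,k2,k3,k4). c1^k1*c2^k2*c3^k3*c4^k4)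
        + ser D5 (\<lambda>(k1,k2,k3,k). c1^k1*c2^k2*c3^k3*(if k \<ge> 1 then tt^k else 0))) $ s"
    unfolding fps_add_nth ser_nth M4 M5 D5_filter FG9_nth AS_sum by (simp add: comp_def)
qed

theorem mainTheorem4:
  shows "FG9 G2_V G2_ends =
           inverse ((1 - Yv*X1*X5*X8) * (1 - Yv*X2*X6*X9) * (1 - Yv*X3*X4*X7) * (1 - Yv*X7*X8*X9))
         + Yv^2*X1*X2*X3*X4*X5*X6 *
           inverse ((1 - Yv*X1*X5*X8) * (1 - Yv*X2*X6*X9) * (1 - Yv*X3*X4*X7)
                    * (1 - Yv^2*X1*X2*X3*X4*X5*X6))
       \<and> FG_y G2_V 9 G2_ends = (1 + fps_X + fps_X^2) / ((1 - fps_X)^3 * (1 - fps_X^2))"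
proof
  have g: "inverse ((1 - fps_X * fps_const c1) * (1 - fps_X * fps_const c2) * (1 - fps_X * fps_const c3)
             * (1 - fps_X * fps_const c4))
        + fps_X^2 * fps_const tt * inverse ((1 - fps_X * fps_const c1) * (1 - fps_X * fps_const c2)
             * (1 - fps_X * fps_const c3) * (1 - fps_X^2 * fps_const tt))
      = ser D4 (\<lambda>(k1,k2,k3,k4). c1^k1*c2^k2*c3^k3*c4^k4)
        + ser D5 (\<lambda>(k1,k2,k3,k). c1^k1*c2^k2*c3^k3*(if k \<ge> 1 then tt^k else 0))"
    by (rule generic_identity[OF inv1_p9])
  have r: "inverse ((1 - Yv*X1*X5*X8) * (1 - Yv*X2*X6*X9) * (1 - Yv*X3*X4*X7) * (1 - Yv*X7*X8*X9))
         + Yv^2*X1*X2*X3*X4*X5*X6 *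
           inverse ((1 - Yv*X1*X5*X8) * (1 - Yv*X2*X6*X9) * (1 - Yv*X3*X4*X7)
                    * (1 - Yv^2*X1*X2*X3*X4*X5*X6)) =
        inverse ((1 - fps_X * fps_const c1) * (1 - fps_X * fps_const c2) * (1 - fps_X * fps_const c3)
             * (1 - fps_X * fps_const c4))
        + fps_X^2 * fps_const tt * inverse ((1 - fps_X * fps_const c1) * (1 - fps_X * fps_const c2)
             * (1 - fps_X * fps_const c3) * (1 - fps_X^2 * fps_const tt))"
    by (simp only: Yv_def X_eqs c1_def c2_def c3_def c4_def tt_def mult.assoc fps_const_mult)
  show "FG9 G2_V G2_ends =
           inverse ((1 - Yv*X1*X5*X8) * (1 - Yv*X2*X6*X9) * (1 - Yv*X3*X4*X7) * (1 - Yv*X7*X8*X9))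
         + Yv^2*X1*X2*X3*X4*X5*X6 *
           inverse ((1 - Yv*X1*X5*X8) * (1 - Yv*X2*X6*X9) * (1 - Yv*X3*X4*X7)
                    * (1 - Yv^2*X1*X2*X3*X4*X5*X6))"
    unfolding r g by (rule part1_coeffs)
next
  show "FG_y G2_V 9 G2_ends = (1 + fps_X + fps_X^2) / ((1 - fps_X)^3 * (1 - fps_X^2))"
    by (rule part2)
qed

end
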